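(* Let $\gamma=000\cdots\in\Omega$ be the all-zero sequence and $B=\Omega\setminus\{\gamma\}$. Then $B\in\mathcal{B}_{\mathcal{U}}$ and $\widehat{\mu}(B)=1$.
   Context: For $n\ge1$, $\Omega_n$ is the set of strings $\alpha_0\alpha_1\cdots\alpha_n$ with $\alpha_k\in\{0,1\}$, $\alpha_0=0$. For $\omega=\alpha_0\cdots\alpha_n$, $\omega'=\alpha'_0\cdots\alpha'_n\in\Omega_n$ let $D^n(\omega,\omega')=2^{-n}\prod_{k=1}^n i^{|\alpha_k-\alpha_{k-1}|}\prod_{k=1}^n i^{-|\alpha'_k-\alpha'_{k-1}|}\,\delta_{\alpha_n\alpha'_n}$ ($i=\sqrt{-1}$) and for $A\subseteq\Omega_n$, $\mu_n(A)=\sum_{\omega,\omega'\in A}D^n(\omega,\omega')$. $\Omega$ is the set of infinite sequences $\alpha_0\alpha_1\cdots$ with $\alpha_k\in\{0,1\}$, $\alpha_0=0$. A cylinder set is a set $\{\alpha_0\alpha_1\cdots\in\Omega:\alpha_0\cdots\alpha_n\in E\}$ with $E\subseteq\Omega_n$; its measure is $\mu(\cdot)=\mu_n(E)$ (well defined). For $A\subseteq\Omega$ and $n\ge0$, $A^{(n)}=\{\omega\in\Omega:\text{some }\omega'\in A\text{ has the same first }n+1\text{ entries as }\omega\}$ (a cylinder set). $A$ is an upper set if $A=\bigcup_n\big(\Omega\setminus(\Omega\setminus A)^{(n)}\big)$; $\mathcal{U}$ is the collection of upper sets; $\mathcal{B}_{\mathcal{U}}=\{A\in\mathcal{U}:\lim_{n\to\infty}\mu\big(\Omega\setminus(\Omega\setminus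 A)^{(n)}\big)\text{ exists}\}$, and for $A\in\mathcal{B}_{\mathcal{U}}$, $\widehat{\mu}(A)=\lim_{n\to\infty}\mu\big(\Omega\setminus(\Omega\setminus A)^{(n)}\big)$. *)

theory Defs
  imports Complex_Main
begin

definition Omega_n :: "nat \<Rightarrow> nat list set" where
  "Omega_n n = {xs. length xs = n + 1 \<and> set xs \<subseteq> {0, 1} \<and> xs ! 0 = 0}"

definition jump :: "nat list \<Rightarrow> nat \<Rightarrow> nat" where
  "jump xs k = nat \<bar>int (xs ! k) - int (xs ! (k - 1))\<bar>"

definition D :: "nat \<Rightarrow> nat list \<Rightarrow> nat list \<Rightarrow> complex" where
  "D n w w' = (1 / 2 ^ n) * (\<Prod>k\<in>{1..n}. \<i> ^ jump w k)
      * (\<Prod>k\<in>{1..n}. inverse (\<i> ^ jump w' k))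
      * (if w ! n = w' ! n then 1 else 0)"

definition mu_n :: "nat \<Rightarrow> nat list set \<Rightarrow> complex" where
  "mu_n n A = (\<Sum>w\<in>A. \<Sum>w'\<in>A. D n w w')"

definition Omega :: "(nat \<Rightarrow> nat) set" where
  "Omega = {w. (\<forall>k. w k \<in> {0, 1}) \<and> w 0 = 0}"

definition prefix :: "nat \<Rightarrow> (nat \<Rightarrow> nat) \<Rightarrow> nat list" where
  "prefix n w = map w [0..<n + 1]"

definition cyl :: "nat \<Rightarrow> nat list set \<Rightarrow> (nat \<Rightarrow> nat) set" where
  "cyl n E = {w \<in> Omega. prefix n w \<in> E}"

definition is_cylinder :: "(nat \<Rightarrow> nat) set \<Rightarrow> bool" where
  "is_cylinder C \<longleftrightarrow> (\<exists>n E. E \<subseteq> Omega_n n \<and> C = cyl n E)"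

text \<open>Measure of a cylinder set (well defined, i.e. independent of the representation).\<close>
definition mu :: "(nat \<Rightarrow> nat) set \<Rightarrow> complex" where
  "mu C = (SOME m. \<exists>n E. E \<subseteq> Omega_n n \<and> C = cyl n E \<and> m = mu_n n E)"

definition approx :: "(nat \<Rightarrow> nat) set \<Rightarrow> nat \<Rightarrow> (nat \<Rightarrow> nat) set" where
  "approx A n = {w \<in> Omega. \<exists>w'\<in>A. \<forall>k\<le>n. w k = w' k}"

definition upper_sets :: "(nat \<Rightarrow> nat) set set" where
  "upper_sets = {A. A \<subseteq> Omega \<and> A = (\<Union>n. Omega - approx (Omega - A) n)}"

definition B_U :: "(nat \<Rightarrow> nat) set set" where
  "B_U = {A \<in> upper_sets. convergent (\<lambda>n. mu (Omega - approx (Omega - A) n))}"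

definition mu_hat :: "(nat \<Rightarrow> nat) set \<Rightarrow> complex" where
  "mu_hat A = lim (\<lambda>n. mu (Omega - approx (Omega - A) n))"

end

theory Submission
  imports Defs
begin

definition fw :: "nat \<Rightarrow> nat list \<Rightarrow> complex" where
  "fw m w = (\<Prod>k\<in>{1..m}. \<i> ^ jump w k)"
definition S :: "nat \<Rightarrow> nat list set \<Rightarrow> nat \<Rightarrow> complex" where
  "S m X a = (\<Sum>w\<in>{w\<in>X. w!m = a}. fw m w)"
definition qq :: "nat \<Rightarrow> nat list set \<Rightarrow> complex" where
  "qq m X = S m X 0 * cnj (S m X 0) + S m X 1 * cnj (S m X 1)"

lemma finite_Omega_n: "finite (Omega_n m)"
proof -
  have "Omega_n m \<subseteq> {xs. set xs \<subseteq> {0,1} \<and> length xs = m+1}" by (auto simp: Omega_n_def)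
  moreover have "finite {xs. set xs \<subseteq> {0::nat,1} \<and> length xs = m+1}"
    by (rule finite_lists_length_eq) auto
  ultimately show ?thesis by (rule finite_subset)
qed

lemma Omega_n_last: "w \<in> Omega_n m \<Longrightarrow> w!m = 0 \<or> w!m = 1"
proof -
  assume "w \<in> Omega_n m"
  then have "length w = m+1" "set w \<subseteq> {0,1}" by (auto simp: Omega_n_def)
  then have "w!m \<in> set w" by auto
  with \<open>set w \<subseteq> {0,1}\<close> show ?thesis by auto
qed

lemma inv_pow_i: "inverse (\<i> ^ j) = cnj (\<i> ^ j)"
  by (simp add: power_inverse[symmetric])

lemma prod_inv_fw: "(\<Prod>k\<in>{1..m}. inverse (\<i> ^ jump w k)) = cnj (fw m w)"
  unfolding fw_def cnj_prod by (simp add: inv_pow_i)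

lemma mu_n_qq:
  assumes X: "X \<subseteq> Omega_n m"
  shows "mu_n m X = qq m X / 2^m"
proof -
  have fin: "finite X" using X finite_Omega_n finite_subset by blast
  have "mu_n m X = (\<Sum>w\<in>X. \<Sum>w'\<in>X. (1/2^m) * (fw m w * (if w'!m = w!m then cnj (fw m w') else 0)))"
    unfolding mu_n_def D_def prod_inv_fw
    by (intro sum.cong refl) (auto simp: fw_def)
  also have "\<dots> = (1/2^m) * (\<Sum>w\<in>X. fw m w * cnj (S m X (w!m)))"
    by (simp add: sum_distrib_left[symmetric] sum_distrib_left sum.inter_filter[OF fin] S_def cnj_sum
       mult_ac if_distrib cong: if_cong)
  also have "(\<Sum>w\<in>X. fw m w * cnj (S m X (w!m))) = 
     (\<Sum>w\<in>{w\<in>X. w!m = 0}. fw m w * cnj (S m X (w!m))) + (\<Sum>w\<in>{w\<in>X. w!m = 1}. fw m w * cnj (S m X (w!m)))"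
  proof -
    have "X = {w\<in>X. w!m = 0} \<union> {w\<in>X. w!m = 1}" using X Omega_n_last by blast
    then show ?thesis using fin by (subst (1) \<open>X = _\<close>, subst sum.union_disjoint) auto
  qed
  also have "\<dots> = qq m X"
    unfolding qq_def by (simp add: sum_distrib_right[symmetric] S_def)
  finally show ?thesis by simp
qed

definition ext :: "nat list set \<Rightarrow> nat list set" where
  "ext X = (\<lambda>w. w@[0]) ` X \<union> (\<lambda>w. w@[1]) ` X"

lemma sum_split01:
  assumes X: "X \<subseteq> Omega_n m"
  shows "(\<Sum>w\<in>X. g w) = (\<Sum>w\<in>{w\<in>X. w!m = 0}. g w) + (\<Sum>w\<in>{w\<in>X. w!m = 1}. g w)"
proof -
  have fin: "finite X" using X finite_Omega_n finite_subset by blast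
  have "X = {w\<in>X. w!m = 0} \<union> {w\<in>X. w!m = 1}" using X Omega_n_last by blast
  then show ?thesis using fin by (subst (1) \<open>X = _\<close>, subst sum.union_disjoint) auto
qed

lemma fw_snoc:
  assumes "length w = Suc m"
  shows "fw (Suc m) (w@[b]) = fw m w * \<i> ^ nat \<bar>int b - int (w!m)\<bar>"
proof -
  have "fw (Suc m) (w@[b]) = (\<Prod>k\<in>{1..m}. \<i> ^ jump (w@[b]) k) * \<i> ^ jump (w@[b]) (Suc m)"
    unfolding fw_def by (simp add: prod.nat_ivl_Suc')
  also have "(\<Prod>k\<in>{1..m}. \<i> ^ jump (w@[b]) k) = fw m w"
    unfolding fw_def using assms by (intro prod.cong refl) (auto simp: jump_def nth_append)
  also have "jump (w@[b]) (Suc m) = nat \<bar>int b - int (w!m)\<bar>"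
    using assms by (simp add: jump_def nth_append)
  finally show ?thesis .
qed

lemma S_ext:
  assumes X: "X \<subseteq> Omega_n m" and b: "b = 0 \<or> b = 1"
  shows "S (Suc m) (ext X) b = (if b = 0 then S m X 0 + \<i> * S m X 1 else \<i> * S m X 0 + S m X 1)"
proof -
  have len: "\<And>w. w \<in> X \<Longrightarrow> length w = Suc m" using X by (auto simp: Omega_n_def)
  have fin: "finite X" using X finite_Omega_n finite_subset by blast
  have "{v\<in>ext X. v!(Suc m) = b} = (\<lambda>w. w@[b]) ` X"
    using b len by (auto simp: ext_def nth_append)
  then have "S (Suc m) (ext X) b = (\<Sum>w\<in>X. fw (Suc m) (w@[b]))"
    unfolding S_def by (simp add: sum.reindex inj_on_def)
  also have "\<dots> = (\<Sum>w\<in>X. fw m w * \<i> ^ nat \<bar>int b - int (w!m)\<bar>)"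
    using len fw_snoc by (intro sum.cong refl) auto
  also have "\<dots> = (\<Sum>w\<in>{w\<in>X. w!m = 0}. fw m w * \<i> ^ nat \<bar>int b - int (w!m)\<bar>)
       + (\<Sum>w\<in>{w\<in>X. w!m = 1}. fw m w * \<i> ^ nat \<bar>int b - int (w!m)\<bar>)"
    by (rule sum_split01[OF X])
  also have "\<dots> = (if b = 0 then S m X 0 + \<i> * S m X 1 else \<i> * S m X 0 + S m X 1)"
    using b unfolding S_def by (auto simp: sum_distrib_left mult.commute)
  finally show ?thesis .
qed

lemma qq_ext:
  assumes X: "X \<subseteq> Omega_n m"
  shows "qq (Suc m) (ext X) = 2 * qq m X"
  unfolding qq_def using S_ext[OF X, of 0] S_ext[OF X, of 1]
  by (simp add: algebra_simps)

lemma Omega_n_Suc: "v \<in> Omega_n (Suc m) \<longleftrightarrow> (\<exists>w b. v = w@[b] \<and> w \<in> Omega_n m \<and> (b = 0 \<or> b = 1))"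
proof
  assume v: "v \<in> Omega_n (Suc m)"
  then have "v \<noteq> []" by (auto simp: Omega_n_def)
  then obtain w b where vw: "v = w@[b]" by (metis append_butlast_last_id)
  show "\<exists>w b. v = w@[b] \<and> w \<in> Omega_n m \<and> (b = 0 \<or> b = 1)"
    using v unfolding vw Omega_n_def by (auto simp: nth_append split: if_split_asm)
next
  assume "\<exists>w b. v = w@[b] \<and> w \<in> Omega_n m \<and> (b = 0 \<or> b = 1)"
  then show "v \<in> Omega_n (Suc m)" by (auto simp: Omega_n_def nth_append)
qed

lemma ext_Omega: "Omega_n (Suc m) = ext (Omega_n m)"
  unfolding ext_def by (auto simp: Omega_n_Suc)

definition Es :: "nat \<Rightarrow> nat \<Rightarrow> nat list set" where
  "Es m n = {w \<in> Omega_n m. \<exists>k\<le>n. w!k \<noteq> 0}"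

lemma Es_sub: "Es m n \<subseteq> Omega_n m" by (auto simp: Es_def)

lemma ext_Es: assumes "n \<le> m" shows "Es (Suc m) n = ext (Es m n)"
proof -
  have *: "\<And>w b. w \<in> Omega_n m \<Longrightarrow> (w@[b])!k = w!k" if "k \<le> n" for k
    using assms that by (auto simp: Omega_n_def nth_append)
  show ?thesis
  proof
    show "Es (Suc m) n \<subseteq> ext (Es m n)"
    proof
      fix v assume "v \<in> Es (Suc m) n"
      then obtain w b k where v: "v = w@[b]" "w \<in> Omega_n m" "b = 0 \<or> b = 1" "k \<le> n" "v!k \<noteq> 0"
        unfolding Es_def Omega_n_Suc by blast
      then have "w \<in> Es m n" using * unfolding Es_def by auto
      then show "v \<in> ext (Es m n)" using v unfolding ext_def by auto
    qed
  next
    show "ext (Es m n) \<subseteq> Es (Suc m) n"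
    proof
      fix v assume "v \<in> ext (Es m n)"
      then obtain w b where v: "v = w@[b]" "w \<in> Es m n" "b = 0 \<or> b = 1"
        unfolding ext_def by blast
      then obtain k where k: "k \<le> n" "w!k \<noteq> 0" "w \<in> Omega_n m" unfolding Es_def by blast
      have "v \<in> Omega_n (Suc m)" using v k unfolding Omega_n_Suc by blast
      moreover have "v!k \<noteq> 0" using * k v by auto
      ultimately show "v \<in> Es (Suc m) n" using k unfolding Es_def by blast
    qed
  qed
qed

lemma qq_Es: "qq (n+k) (Es (n+k) n) = 2^k * qq n (Es n n)"
proof (induction k)
  case 0 then show ?case by simp
next
  case (Suc k)
  have "qq (n + Suc k) (Es (n + Suc k) n) = qq (Suc (n+k)) (ext (Es (n+k) n))"
    by (simp add: ext_Es)
  also have "\<dots> = 2 * qq (n+k) (Es (n+k) n)" by (rule qq_ext[OF Es_sub])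
  finally show ?case using Suc by simp
qed

lemma mu_Es: assumes "n \<le> m" shows "mu_n m (Es m n) = qq n (Es n n) / 2^n"
proof -
  obtain k where m: "m = n + k" using assms le_Suc_ex by blast
  show ?thesis unfolding mu_n_qq[OF Es_sub] m qq_Es by (simp add: power_add)
qed

lemma qq_Omega: "qq m (Omega_n m) = 2^m"
proof (induction m)
  case 0
  have "Omega_n 0 = {[0]}" by (auto simp: Omega_n_def length_Suc_conv)
  moreover have "{w\<in>{[0::nat]}. w!0 = 0} = {[0]}" "{w\<in>{[0::nat]}. w!0 = 1} = {}" by auto
  ultimately show ?case by (simp add: qq_def S_def fw_def)
next
  case (Suc m) then show ?case
    using qq_ext[of "Omega_n m" m] by (simp add: ext_Omega)
qed

lemma fw_zero: "fw m (replicate (Suc m) 0) = 1"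
  unfolding fw_def jump_def by (intro prod.neutral) (auto simp: nth_replicate simp del: replicate_Suc)

lemma Es_nn: "Es n n = Omega_n n - {replicate (Suc n) 0}"
proof -
  have eq: "(\<forall>k\<le>n. w!k = 0) \<longleftrightarrow> w = replicate (Suc n) 0" if "w \<in> Omega_n n" for w
  proof
    assume a: "\<forall>k\<le>n. w!k = 0"
    have "length w = Suc n" using that by (simp add: Omega_n_def)
    then show "w = replicate (Suc n) 0"
      by (intro nth_equalityI) (simp_all add: a less_Suc_eq_le del: replicate_Suc)
  next
    assume "w = replicate (Suc n) 0"
    then show "\<forall>k\<le>n. w!k = 0" by (simp del: replicate_Suc)
  qed
  show ?thesis unfolding Es_def
  proof (intro set_eqI iffI)
    fix w assume h: "w \<in> {w \<in> Omega_n n. \<exists>k\<le>n. w ! k \<noteq> 0}"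
    then have "w \<in> Omega_n n" "\<exists>k\<le>n. w ! k \<noteq> 0" by auto
    then have "w \<noteq> replicate (Suc n) 0" using eq[of w] by (metis neq0_conv)
    with \<open>w \<in> Omega_n n\<close> show "w \<in> Omega_n n - {replicate (Suc n) 0}" by simp
  next
    fix w assume h: "w \<in> Omega_n n - {replicate (Suc n) 0}"
    then have "w \<in> Omega_n n" "w \<noteq> replicate (Suc n) 0" by auto
    then have "\<not> (\<forall>k\<le>n. w!k = 0)" using eq[of w] by simp
    with \<open>w \<in> Omega_n n\<close> show "w \<in> {w \<in> Omega_n n. \<exists>k\<le>n. w ! k \<noteq> 0}" by simp
  qed
qed

lemma S_Es_nn: "S n (Es n n) a = S n (Omega_n n) a - (if a = 0 then 1 else 0)"
proof -
  define z where "z = replicate (Suc n) (0::nat)"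
  have z: "z \<in> Omega_n n" unfolding z_def by (simp add: Omega_n_def del: replicate_Suc)
  have z0: "z ! n = 0" unfolding z_def by (simp del: replicate_Suc)
  have fz: "fw n z = 1" unfolding z_def by (rule fw_zero)
  have E: "Es n n = Omega_n n - {z}" unfolding z_def by (rule Es_nn)
  have fin: "finite {w \<in> Omega_n n. w!n = a}" using finite_Omega_n by simp
  show ?thesis
  proof (cases "a = 0")
    case True
    have "{w \<in> Es n n. w!n = a} = {w \<in> Omega_n n. w!n = a} - {z}" unfolding E by blast
    moreover have "z \<in> {w \<in> Omega_n n. w!n = a}" using z z0 True by blast
    ultimately show ?thesis unfolding S_def using fin True fz by (simp add: sum_diff1)
  next
    case False
    have "{w \<in> Es n n. w!n = a} = {w \<in> Omega_n n. w!n = a}" unfolding E using z0 False by blast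
    then show ?thesis unfolding S_def using False by simp
  qed
qed

definition val :: "nat \<Rightarrow> complex" where "val n = mu_n n (Es n n)"

lemma val_eq: "val n = 1 + (1 - S n (Omega_n n) 0 - cnj (S n (Omega_n n) 0)) / 2^n"
proof -
  have q: "qq n (Omega_n n) = 2^n" by (rule qq_Omega)
  have "val n = qq n (Es n n) / 2^n" unfolding val_def by (rule mu_n_qq[OF Es_sub])
  also have "qq n (Es n n) = qq n (Omega_n n) + (1 - S n (Omega_n n) 0 - cnj (S n (Omega_n n) 0))"
    unfolding qq_def S_Es_nn by (simp add: algebra_simps complex_cnj_diff)
  finally show ?thesis using q by (simp add: add_divide_distrib)
qed

lemma s0_bound: "cmod (S n (Omega_n n) 0) \<le> sqrt 2 ^ n"
proof -
  let ?a = "S n (Omega_n n) 0" and ?b = "S n (Omega_n n) 1"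
  have "complex_of_real ((cmod ?a)^2 + (cmod ?b)^2) = 2^n"
    using qq_Omega[of n] unfolding qq_def of_real_add complex_norm_square by simp
  then have "(cmod ?a)^2 + (cmod ?b)^2 = 2^n"
    using of_real_eq_iff[of "(cmod ?a)^2 + (cmod ?b)^2" "2^n", where 'a=complex] by simp
  then have "(cmod ?a)^2 \<le> 2^n" by (metis le_add_same_cancel1 zero_le_power2)
  then have "cmod ?a \<le> sqrt (2^n)" using real_le_rsqrt by blast
  then show ?thesis by (simp add: real_sqrt_power)
qed

lemma val_lim: "val \<longlonglongrightarrow> 1"
proof -
  let ?g = "\<lambda>n. (1/2)^n + 2 * (1 / sqrt 2)^n :: real"
  have g: "?g \<longlonglongrightarrow> 0"
  proof -
    have A: "(\<lambda>n. (1/2::real)^n) \<longlonglongrightarrow> 0" by (rule LIMSEQ_power_zero) simp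
    have B: "(\<lambda>n. (1/sqrt 2::real)^n) \<longlonglongrightarrow> 0" by (rule LIMSEQ_power_zero) simp
    have "(\<lambda>n. (1/2::real)^n + 2 * (1/sqrt 2::real)^n) \<longlonglongrightarrow> 0 + 2 * 0"
      by (intro tendsto_add tendsto_mult A B tendsto_const)
    then show ?thesis by simp
  qed
  have "norm (val n - 1) \<le> ?g n" for n
  proof -
    let ?a = "S n (Omega_n n) 0"
    have "val n - 1 = (1 - ?a - cnj ?a) / 2^n" by (simp add: val_eq)
    then have "norm (val n - 1) = norm (1 - ?a - cnj ?a) / 2^n" by (simp add: norm_divide norm_power)
    also have "norm (1 - ?a - cnj ?a) \<le> 1 + 2 * sqrt 2 ^ n"
    proof -
      have "norm (1 - ?a - cnj ?a) \<le> norm (1 - ?a) + norm (cnj ?a)" by (rule norm_triangle_ineq4)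
      also have "norm (1 - ?a) \<le> norm (1::complex) + norm ?a" by (rule norm_triangle_ineq4)
      finally show ?thesis using s0_bound[of n] by simp
    qed
    then have "norm (1 - ?a - cnj ?a) / 2^n \<le> (1 + 2 * sqrt 2 ^ n) / 2^n"
      by (simp add: divide_right_mono)
    also have "(1 + 2 * sqrt 2 ^ n) / 2^n = ?g n"
    proof -
      have e: "(2::real)^n = sqrt 2 ^ n * sqrt 2 ^ n" by (simp flip: power_mult_distrib)
      have "(1 + 2 * sqrt 2 ^ n) / 2^n = 1 / 2^n + 2 * (sqrt 2 ^ n / (sqrt 2 ^ n * sqrt 2 ^ n))"
        unfolding e by (simp add: add_divide_distrib)
      also have "\<dots> = ?g n" by (simp add: power_divide e)
      finally show ?thesis .
    qed
    finally show ?thesis .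
  qed
  then have "(\<lambda>n. norm (val n - 1)) \<longlonglongrightarrow> 0"
    by (intro real_tendsto_sandwich[OF _ _ tendsto_const g]) auto
  then have "(\<lambda>n. val n - 1) \<longlonglongrightarrow> 0" by (rule tendsto_norm_zero_cancel)
  then show ?thesis by (simp add: LIM_zero_iff)
qed

definition Cn :: "nat \<Rightarrow> (nat \<Rightarrow> nat) set" where
  "Cn n = {w \<in> Omega. \<exists>k\<le>n. w k \<noteq> 0}"

lemma prefix_nth: "k \<le> m \<Longrightarrow> prefix m w ! k = w k"
  unfolding prefix_def by (simp add: nth_map_upt less_Suc_eq_le del: upt_Suc)

lemma prefix_Omega: "w \<in> Omega \<Longrightarrow> prefix m w \<in> Omega_n m"
  unfolding prefix_def Omega_def Omega_n_def by (auto simp del: upt_Suc) (metis neq0_conv)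

definition extl :: "nat list \<Rightarrow> nat \<Rightarrow> nat" where
  "extl x = (\<lambda>k. if k < length x then x!k else 0)"

lemma extl_Omega: "x \<in> Omega_n m \<Longrightarrow> extl x \<in> Omega"
  unfolding extl_def Omega_def Omega_n_def by (auto) (metis insertE nth_mem subsetD empty_iff)

lemma prefix_extl: "x \<in> Omega_n m \<Longrightarrow> prefix m (extl x) = x"
  unfolding extl_def Omega_n_def prefix_def
  by (intro nth_equalityI) (auto simp del: upt_Suc)

lemma Cn_cyl: "n \<le> m \<Longrightarrow> Cn n = cyl m (Es m n)"
  unfolding Cn_def cyl_def Es_def using prefix_Omega prefix_nth by auto

lemma Cn_unique:
  assumes E: "E \<subseteq> Omega_n m" and C: "Cn n = cyl m E"
  shows "n \<le> m \<and> E = Es m n"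
proof -
  have nm: "n \<le> m"
  proof (rule ccontr)
    assume "\<not> n \<le> m"
    define w :: "nat \<Rightarrow> nat" where "w = (\<lambda>k. if k = n then 1 else 0)"
    have "n \<noteq> 0" using \<open>\<not> n \<le> m\<close> by auto
    then have "w \<in> Cn n" unfolding Cn_def Omega_def w_def by auto
    then have "prefix m w \<in> E" using C unfolding cyl_def by auto
    moreover have "prefix m w = prefix m (\<lambda>k. 0)"
      unfolding prefix_def w_def using \<open>\<not> n \<le> m\<close> by (auto simp del: upt_Suc)
    moreover have "(\<lambda>k. 0::nat) \<in> Omega" unfolding Omega_def by auto
    ultimately have "(\<lambda>k. 0::nat) \<in> cyl m E" unfolding cyl_def by auto
    then have "(\<lambda>k. 0::nat) \<in> Cn n" using C by simp
    then show False unfolding Cn_def by auto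
  qed
  have "E = Es m n"
  proof (intro set_eqI iffI)
    fix x assume x: "x \<in> E"
    then have xO: "x \<in> Omega_n m" using E by auto
    have "extl x \<in> cyl m E" unfolding cyl_def using x xO extl_Omega prefix_extl by auto
    then have "extl x \<in> Cn n" using C by simp
    then obtain k where k: "k \<le> n" "extl x k \<noteq> 0" unfolding Cn_def by auto
    have "x ! k = extl x k" using k nm xO unfolding extl_def Omega_n_def by auto
    then show "x \<in> Es m n" unfolding Es_def using xO k by auto
  next
    fix x assume x: "x \<in> Es m n"
    then have xO: "x \<in> Omega_n m" unfolding Es_def by auto
    obtain k where k: "k \<le> n" "x!k \<noteq> 0" using x unfolding Es_def by auto
    have "x ! k = extl x k" using k nm xO unfolding extl_def Omega_n_def by auto
    then have "extl x \<in> Cn n" unfolding Cn_def using extl_Omega[OF xO] k by auto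
    then have "extl x \<in> cyl m E" using C by simp
    then show "x \<in> E" unfolding cyl_def using prefix_extl[OF xO] by auto
  qed
  with nm show ?thesis by simp
qed

lemma mu_Cn: "mu (Cn n) = val n"
proof -
  let ?P = "\<lambda>v. \<exists>m E. E \<subseteq> Omega_n m \<and> Cn n = cyl m E \<and> v = mu_n m E"
  have ex: "?P (val n)" unfolding val_def using Cn_cyl[of n n] Es_sub by blast
  have all: "?P v \<Longrightarrow> v = val n" for v
  proof -
    assume "?P v"
    then obtain m E where "E \<subseteq> Omega_n m" "Cn n = cyl m E" "v = mu_n m E" by blast
    with Cn_unique have "n \<le> m" "E = Es m n" "v = mu_n m E" by blast+
    then show ?thesis using mu_Es[of n m] mu_n_qq[OF Es_sub, of n n] unfolding val_def by simp
  qed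
  have "?P (mu (Cn n))" unfolding mu_def by (rule someI[of ?P, OF ex])
  then show ?thesis by (rule all)
qed

theorem theorem4p6:
  fixes \<gamma> :: "nat \<Rightarrow> nat" and B :: "(nat \<Rightarrow> nat) set"
  assumes "\<gamma> = (\<lambda>k. 0)" and "B = Omega - {\<gamma>}"
  shows "B \<in> B_U \<and> mu_hat B = 1"
proof -
  have g: "\<gamma> \<in> Omega" using assms(1) unfolding Omega_def by auto
  have OB: "Omega - B = {\<gamma>}" using assms(2) g by auto
  have C: "Omega - approx (Omega - B) n = Cn n" for n
    unfolding OB approx_def Cn_def assms(1) by auto
  have U: "(\<Union>n. Cn n) = B"
    unfolding Cn_def assms by (auto simp: fun_eq_iff) (metis le_refl)
  have "B \<subseteq> Omega" using assms(2) by auto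
  moreover have "B = (\<Union>n. Omega - approx (Omega - B) n)" using C U by simp
  ultimately have up: "B \<in> upper_sets" unfolding upper_sets_def by blast
  have lim: "(\<lambda>n. mu (Omega - approx (Omega - B) n)) \<longlonglongrightarrow> 1"
    unfolding C mu_Cn by (rule val_lim)
  then have "B \<in> B_U" unfolding B_U_def using up convergent_def by blast
  moreover have "mu_hat B = 1" unfolding mu_hat_def using lim by (rule limI)
  ultimately show ?thesis by simp
qed

end
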